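(* Let $u$ be an endomorphism of a vector space $V$ of countably infinite dimension over a field $\mathbb{F}$, and let $\lambda,a\in\mathbb{F}$. Assume that $V^u=W\oplus H$ is a splitting into submodules and that $F$ is a non-zero free submodule of $W$ such that: (a) $W/F$ is finite-dimensional over $\mathbb{F}$ and, if non-zero, has a stratification satisfying property (PA+); (b) $u(x)=\lambda x$ for all $x\in H$. Then there exists an endomorphism $v$ of $V$ such that $v^2=av$ and $u-v$ is elementary.
   Context: $V^u$ is the $\mathbb{F}[t]$-module with underlying space $V$ and $t\cdot x:=u(x)$; $u$ is elementary if $V^u$ is free. A stratification of a non-zero $\mathbb{F}[t]$-module $M$ is an increasing family $(M_\alpha)_{\alpha\in D}$ of submodules indexed by a well-ordered set $D$ such that each quotient $M_\alpha/\sum_{\beta<\alpha}M_\beta$ is non-zero and monogenous (cyclic), and $M=\sum_{\alpha\in D}M_\alpha$; its dimension sequence is $n_\alpha:=\dim_{\mathbb{F}}(M_\alpha/\sum_{\beta<\alpha}M_\beta)\in\mathbb{N}^*\cup\{+\infty\}$. Property (PA+): $n_\alpha\ge 2$ whenever $\alpha$ is the minimum of $D$ or the successor of some element of $D$. *)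

theory Defs
  imports Main "HOL-Library.Countable_Set" "HOL-Library.Extended_Nat"
begin

text \<open>The \<open>F[t]\<close>-module \<open>V^u\<close> has \<open>t \<cdot> x = u x\<close>; its submodules are exactly the
  \<open>u\<close>-stable linear subspaces.\<close>

definition submod :: "('f::field \<Rightarrow> 'v::ab_group_add \<Rightarrow> 'v) \<Rightarrow> ('v \<Rightarrow> 'v) \<Rightarrow> 'v set \<Rightarrow> bool" where
  "submod scale u M \<longleftrightarrow> module.subspace scale M \<and> u ` M \<subseteq> M"

text \<open>A submodule \<open>M\<close> of \<open>V^u\<close> is free over \<open>F[t]\<close> iff it has an \<open>F[t]\<close>-basis \<open>B\<close>,
  i.e. the family \<open>(u^k b)\<^sub>(b\<in>B, k\<in>\<nat>)\<close> is an \<open>F\<close>-basis of \<open>M\<close> (injectively indexed).\<close>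
definition free_submod :: "('f::field \<Rightarrow> 'v::ab_group_add \<Rightarrow> 'v) \<Rightarrow> ('v \<Rightarrow> 'v) \<Rightarrow> 'v set \<Rightarrow> bool" where
  "free_submod scale u M \<longleftrightarrow> submod scale u M \<and>
     (\<exists>B \<subseteq> M. inj_on (\<lambda>(b, k). (u ^^ k) b) (B \<times> (UNIV :: nat set)) \<and>
        module.independent scale ((\<lambda>(b, k). (u ^^ k) b) ` (B \<times> (UNIV :: nat set))) \<and>
        module.span scale ((\<lambda>(b, k). (u ^^ k) b) ` (B \<times> (UNIV :: nat set))) = M)"

definition elementary :: "('f::field \<Rightarrow> 'v::ab_group_add \<Rightarrow> 'v) \<Rightarrow> ('v \<Rightarrow> 'v) \<Rightarrow> bool" where
  "elementary scale u \<longleftrightarrow> free_submod scale u UNIV"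

text \<open>Dimension over \<open>F\<close> of the quotient \<open>M / L\<close> (for subspaces \<open>L \<subseteq> M\<close>): the least
  size of a subset of \<open>M\<close> whose image spans \<open>M/L\<close>, or \<open>\<infinity>\<close> if there is no finite one.\<close>
definition qdim :: "('f::field \<Rightarrow> 'v::ab_group_add \<Rightarrow> 'v) \<Rightarrow> 'v set \<Rightarrow> 'v set \<Rightarrow> enat" where
  "qdim scale M L =
     (if \<exists>S. S \<subseteq> M \<and> finite S \<and> M \<subseteq> module.span scale (L \<union> S)
      then enat (LEAST n. \<exists>S. S \<subseteq> M \<and> finite S \<and> card S = n \<and> M \<subseteq> module.span scale (L \<union> S))
      else \<infinity>)"

text \<open>The submodule \<open>\<Sum>\<^sub>\<beta>\<^sub><\<^sub>\<alpha> M\<^sub>\<beta>\<close> of \<open>W/F\<close>, lifted to \<open>V\<close>: the span of \<open>F\<close> and all \<open>M\<^sub>\<beta>\<close>, \<open>\<beta> < \<alpha>\<close>.\<close>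
definition below :: "('f::field \<Rightarrow> 'v::ab_group_add \<Rightarrow> 'v) \<Rightarrow> 'v set \<Rightarrow> 'd::wellorder set \<Rightarrow> ('d \<Rightarrow> 'v set) \<Rightarrow> 'd \<Rightarrow> 'v set" where
  "below scale Fm D M \<alpha> = module.span scale (Fm \<union> (\<Union>\<beta>\<in>{\<beta>\<in>D. \<beta> < \<alpha>}. M \<beta>))"

text \<open>Submodules of \<open>W/F\<close> are represented by the
  submodules \<open>M\<close> of \<open>V^u\<close> with \<open>F \<subseteq> M \<subseteq> W\<close>.\<close>
definition stratification_quot ::
  "('f::field \<Rightarrow> 'v::ab_group_add \<Rightarrow> 'v) \<Rightarrow> ('v \<Rightarrow> 'v) \<Rightarrow> 'v set \<Rightarrow> 'v set \<Rightarrow> 'd::wellorder set \<Rightarrow> ('d \<Rightarrow> 'v set) \<Rightarrow> bool" where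
  "stratification_quot scale u W Fm D M \<longleftrightarrow>
     (\<forall>\<alpha>\<in>D. submod scale u (M \<alpha>) \<and> Fm \<subseteq> M \<alpha> \<and> M \<alpha> \<subseteq> W) \<and>
     (\<forall>\<alpha>\<in>D. \<forall>\<beta>\<in>D. \<alpha> \<le> \<beta> \<longrightarrow> M \<alpha> \<subseteq> M \<beta>) \<and>
     (\<forall>\<alpha>\<in>D. \<not> M \<alpha> \<subseteq> below scale Fm D M \<alpha>) \<and>
     (\<forall>\<alpha>\<in>D. \<exists>x\<in>M \<alpha>. M \<alpha> \<subseteq> module.span scale (below scale Fm D M \<alpha> \<union> range (\<lambda>k. (u ^^ k) x))) \<and>
     W = module.span scale (Fm \<union> (\<Union>\<alpha>\<in>D. M \<alpha>))"

definition PA_plus ::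
  "('f::field \<Rightarrow> 'v::ab_group_add \<Rightarrow> 'v) \<Rightarrow> 'v set \<Rightarrow> 'd::wellorder set \<Rightarrow> ('d \<Rightarrow> 'v set) \<Rightarrow> bool" where
  "PA_plus scale Fm D M \<longleftrightarrow>
     (\<forall>\<alpha>\<in>D. ((\<forall>\<beta>\<in>D. \<alpha> \<le> \<beta>) \<or>
              (\<exists>\<beta>\<in>D. \<beta> < \<alpha> \<and> \<not> (\<exists>\<gamma>\<in>D. \<beta> < \<gamma> \<and> \<gamma> < \<alpha>)))
            \<longrightarrow> qdim scale (M \<alpha>) (below scale Fm D M \<alpha>) \<ge> 2)"

end

theory Submission
  imports Defs
begin

context vector_space begin
interpretation vp: vector_space_pair scale scale by unfold_locales

lemma lin_facts:
  assumes "Vector_Spaces.linear scale scale f"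
  shows "f (x+y) = f x + f y" "f (c *s x) = c *s f x" "f (x - y) = f x - f y" "f 0 = 0"
    "f (- x) = - f x" "f ` span S = span (f ` S)"
proof -
  interpret l: Vector_Spaces.linear scale scale f by fact
  show "f (x+y) = f x + f y" "f (c *s x) = c *s f x" "f (x - y) = f x - f y" "f 0 = 0"
    "f (- x) = - f x" "f ` span S = span (f ` S)"
    by (auto simp: l.add l.scale l.diff l.zero l.neg l.span_image)
qed

lemma lin_span_mono:
  assumes "Vector_Spaces.linear scale scale f" "f ` A \<subseteq> span B" "x \<in> span A"
  shows "f x \<in> span B"
proof -
  have "f x \<in> f ` span A" using assms(3) by blast
  also have "\<dots> = span (f ` A)" using lin_facts(6)[OF assms(1)] .
  also have "\<dots> \<subseteq> span B" using assms(2) by (metis span_minimal subspace_span)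
  finally show ?thesis .
qed

lemma lin_eq_span:
  assumes "Vector_Spaces.linear scale scale f" "Vector_Spaces.linear scale scale g"
    "x \<in> span B" "\<And>b. b \<in> B \<Longrightarrow> f b = g b"
  shows "f x = g x"
  using vp.linear_eq_on[OF assms(1,2,3)] assms(4) by blast

lemma indep_of_card_dim:
  assumes fB: "finite B" and dVB: "dim (span B) \<ge> card B"
  shows "independent B"
proof -
  {
    fix a
    assume a: "a \<in> B" "a \<in> span (B - {a})"
    from a fB have c0: "card B \<noteq> 0" by auto
    from a fB have cb: "card (B - {a}) = card B - 1" by auto
    have eq: "insert a (B - {a}) = B" using a by blast
    have "span B \<subseteq> span (B - {a})"
    proof
      fix x assume "x \<in> span B"
      from span_trans[OF a(2), unfolded eq, OF this] show "x \<in> span (B - {a})" .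
    qed
    from dim_le_card[OF this] fB have "dim (span B) \<le> card (B - {a})" by simp
    with c0 dVB cb have False by simp
  }
  then show ?thesis unfolding dependent_def by blast
qed

lemma chain_elementary:
  fixes e :: "'g \<Rightarrow> nat \<Rightarrow> 'b"
  assumes lin: "Vector_Spaces.linear scale scale s"
  and inj: "inj_on (\<lambda>(g,n). e g n) (G \<times> UNIV)"
  and ind: "independent ((\<lambda>(g,n). e g n) ` (G \<times> UNIV))"
  and sp: "span ((\<lambda>(g,n). e g n) ` (G \<times> UNIV)) = UNIV"
  and hs: "\<And>g n. g \<in> G \<Longrightarrow> s (e g n) - e g (Suc n) \<in> span (e g ` {..n})"
  shows "elementary scale s"
proof -
  define f where "f g n = (s^^n) (e g 0)" for g n
  have fS: "f g (Suc n) = s (f g n)" for g n by (simp add: f_def)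
  have A: "f g n - e g n \<in> span (e g ` {..<n})" if "g \<in> G" for g n
  proof (induction n)
    case 0 then show ?case by (simp add: f_def span_zero)
  next
    case (Suc n)
    have sub: "s ` (e g ` {..<n}) \<subseteq> span (e g ` {..n})"
    proof
      fix y assume "y \<in> s ` (e g ` {..<n})"
      then obtain m where m: "m < n" "y = s (e g m)" by auto
      have "span (e g ` {..m}) \<subseteq> span (e g ` {..n})" using m by (intro span_mono image_mono) auto
      then have "s (e g m) - e g (Suc m) \<in> span (e g ` {..n})"
        using hs[OF that, of m] by auto
      moreover have "e g (Suc m) \<in> span (e g ` {..n})" using m by (intro span_base) auto
      ultimately have "s (e g m) - e g (Suc m) + e g (Suc m) \<in> span (e g ` {..n})"
        by (rule span_add)
      then show "y \<in> span (e g ` {..n})" using m by simp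
    qed
    have 1: "s (f g n - e g n) \<in> span (e g ` {..n})"
      by (rule lin_span_mono[OF lin sub Suc.IH])
    have 2: "s (e g n) - e g (Suc n) \<in> span (e g ` {..n})" using hs[OF that] .
    have "f g (Suc n) - e g (Suc n) = (s (e g n) - e g (Suc n)) + s (f g n - e g n)"
      using lin_facts(3)[OF lin] by (simp add: fS)
    also have "\<dots> \<in> span (e g ` {..n})" using 2 1 by (rule span_add)
    finally show ?case by (simp add: lessThan_Suc_atMost)
  qed
  have Bs: "e g k \<in> span (f g ` {..k})" if "g \<in> G" for g k
  proof (induction k rule: less_induct)
    case (less k)
    have "e g ` {..<k} \<subseteq> span (f g ` {..<k})"
    proof
      fix y assume "y \<in> e g ` {..<k}"
      then obtain m where m: "m < k" "y = e g m" by auto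
      have "span (f g ` {..m}) \<subseteq> span (f g ` {..<k})" using m by (intro span_mono) auto
      then show "y \<in> span (f g ` {..<k})" using less.IH[OF m(1)] m by auto
    qed
    then have "span (e g ` {..<k}) \<subseteq> span (f g ` {..<k})"
      by (metis span_minimal subspace_span)
    also have "\<dots> \<subseteq> span (f g ` {..k})" by (intro span_mono) auto
    finally have "f g k - e g k \<in> span (f g ` {..k})" using A[OF that, of k] by blast
    moreover have "f g k \<in> span (f g ` {..k})" by (intro span_base) auto
    ultimately have "f g k - (f g k - e g k) \<in> span (f g ` {..k})" by (rule span_diff[rotated])
    then show ?case by simp
  qed
  have Af: "f g k \<in> span (e g ` {..k})" if "g \<in> G" for g k
  proof -
    have "span (e g ` {..<k}) \<subseteq> span (e g ` {..k})" by (intro span_mono image_mono) auto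
    then have "f g k - e g k \<in> span (e g ` {..k})"
      using A[OF that, of k] by auto
    moreover have "e g k \<in> span (e g ` {..k})" by (intro span_base) auto
    ultimately have "f g k - e g k + e g k \<in> span (e g ` {..k})" by (rule span_add)
    then show ?thesis by simp
  qed
  have blk: "independent ((\<lambda>(g,k). f g k) ` (G0 \<times> {..N})) \<and> inj_on (\<lambda>(g,k). f g k) (G0 \<times> {..N})"
    if G0: "finite G0" "G0 \<subseteq> G" for G0 N
  proof -
    let ?D = "G0 \<times> {..N}"
    let ?X = "(\<lambda>(g,k). f g k) ` ?D"
    let ?Y = "(\<lambda>(g,k). e g k) ` ?D"
    have fD: "finite ?D" using G0 by auto
    have indY: "independent ?Y" by (rule independent_mono[OF ind]) (use G0 in auto)
    have injY: "inj_on (\<lambda>(g,k). e g k) ?D" by (rule inj_on_subset[OF inj]) (use G0 in auto)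
    have cY: "card ?Y = card ?D" using card_image[OF injY] .
    have XY: "?X \<subseteq> span ?Y"
    proof
      fix x assume "x \<in> ?X"
      then obtain g k where gk: "g \<in> G0" "k \<le> N" "x = f g k" by auto
      have "span (e g ` {..k}) \<subseteq> span ?Y" using gk by (intro span_mono) auto
      then show "x \<in> span ?Y" using Af[of g k] gk G0 by auto
    qed
    have YX: "?Y \<subseteq> span ?X"
    proof
      fix x assume "x \<in> ?Y"
      then obtain g k where gk: "g \<in> G0" "k \<le> N" "x = e g k" by auto
      have "span (f g ` {..k}) \<subseteq> span ?X" using gk by (intro span_mono) auto
      then show "x \<in> span ?X" using Bs[of g k] gk G0 by auto
    qed
    have spXY: "span ?X = span ?Y" using XY YX by (intro span_eq[THEN iffD2] conjI)
    have dY: "dim (span ?Y) = card ?Y" using dim_span_eq_card_independent[OF indY] .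
    have fX: "finite ?X" using fD by simp
    have cX: "card ?X \<le> card ?D" using card_image_le[OF fD] .
    have "dim (span ?X) \<le> card ?X" using dim_le_card[OF order_refl fX] by simp
    then have cX2: "card ?X = card ?D" using cX dY cY spXY by simp
    have indX: "independent ?X"
      by (rule indep_of_card_dim) (use fX cX2 dY cY spXY in auto)
    have injX: "inj_on (\<lambda>(g,k). f g k) ?D"
      by (rule eq_card_imp_inj_on[OF fD cX2])
    show ?thesis using indX injX by blast
  qed
  let ?Z = "(\<lambda>(g,k). f g k) ` (G \<times> UNIV)"
  have injZ: "inj_on (\<lambda>(g,k). f g k) (G \<times> UNIV)"
  proof (rule inj_onI, clarsimp)
    fix g k g' k' assume h: "g \<in> G" "g' \<in> G" "f g k = f g' k'"
    have "inj_on (\<lambda>(g,k). f g k) ({g,g'} \<times> {..max k k'})" using blk[of "{g,g'}" "max k k'"] h by auto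
    moreover have "(g,k) \<in> {g,g'} \<times> {..max k k'}" "(g',k') \<in> {g,g'} \<times> {..max k k'}" by auto
    ultimately show "g = g' \<and> k = k'" using h(3) unfolding inj_on_def by fastforce
  qed
  have indZ: "independent ?Z"
    unfolding independent_explicit_finite_subsets
  proof (rule allI, intro impI)
    fix S assume S: "S \<subseteq> ?Z" "finite S"
    then obtain T where T: "T \<subseteq> G \<times> UNIV" "finite T" "S = (\<lambda>(g,k). f g k) ` T"
      by (metis finite_subset_image)
    define G0 where "G0 = fst ` T"
    define N where "N = Max (snd ` T)"
    have G0: "finite G0" "G0 \<subseteq> G" using T by (auto simp: G0_def)
    have "T \<subseteq> G0 \<times> {..N}"
      using T by (force simp: G0_def N_def intro: Max_ge)
    then have "S \<subseteq> (\<lambda>(g,k). f g k) ` (G0 \<times> {..N})" using T by auto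
    moreover have "independent ((\<lambda>(g,k). f g k) ` (G0 \<times> {..N}))" using blk[OF G0] by blast
    ultimately show "\<forall>u. (\<Sum>v\<in>S. u v *s v) = 0 \<longrightarrow> (\<forall>v\<in>S. u v = 0)"
      using S(2) unfolding independent_explicit_finite_subsets by blast
  qed
  have spZ: "span ?Z = UNIV"
  proof -
    have "(\<lambda>(g,n). e g n) ` (G \<times> UNIV) \<subseteq> span ?Z"
    proof
      fix x assume "x \<in> (\<lambda>(g,n). e g n) ` (G \<times> UNIV)"
      then obtain g k where gk: "g \<in> G" "x = e g k" by auto
      have "span (f g ` {..k}) \<subseteq> span ?Z" using gk by (intro span_mono) auto
      then show "x \<in> span ?Z" using Bs[OF gk(1), of k] gk by auto
    qed
    then have "span ((\<lambda>(g,n). e g n) ` (G \<times> UNIV)) \<subseteq> span ?Z"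
      by (metis span_minimal subspace_span)
    then show ?thesis using sp by auto
  qed
  define B where "B = (\<lambda>g. e g 0) ` G"
  have imB: "(\<lambda>(b, k). (s ^^ k) b) ` (B \<times> UNIV) = ?Z"
    by (force simp: B_def f_def)
  have injB: "inj_on (\<lambda>(b, k). (s ^^ k) b) (B \<times> UNIV)"
  proof (rule inj_onI, clarsimp simp: B_def)
    fix g k g' k' assume h: "g \<in> G" "g' \<in> G" "(s ^^ k) (e g 0) = (s ^^ k') (e g' 0)"
    then have "g = g' \<and> k = k'" using injZ unfolding inj_on_def f_def by auto
    then show "e g 0 = e g' 0 \<and> k = k'" by simp
  qed
  show ?thesis
    unfolding elementary_def free_submod_def submod_def
    using injB imB indZ spZ by (intro conjI exI[of _ B]) (auto simp: subspace_UNIV)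
qed

end

context vector_space begin

lemma tri_indep:
  fixes r :: "nat \<Rightarrow> 'b"
  assumes "independent A" "\<And>k. k < n \<Longrightarrow> r k \<notin> span (A \<union> r ` {..<k})"
  shows "independent (A \<union> r ` {..<n}) \<and> inj_on r {..<n} \<and> A \<inter> r ` {..<n} = {}"
  using assms(2)
proof (induction n)
  case 0 then show ?case using assms(1) by simp
next
  case (Suc n)
  have IH: "independent (A \<union> r ` {..<n}) \<and> inj_on r {..<n} \<and> A \<inter> r ` {..<n} = {}"
    by (rule Suc.IH) (rule Suc.prems, simp)
  have nn: "r n \<notin> span (A \<union> r ` {..<n})" by (rule Suc.prems) simp
  have eq: "A \<union> r ` {..<Suc n} = insert (r n) (A \<union> r ` {..<n})"
    by (auto simp: lessThan_Suc)
  have i0: "independent (insert (r n) (A \<union> r ` {..<n}))"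
    using independent_insertI[OF nn] IH by simp
  have i2: "r n \<notin> A \<union> r ` {..<n}" using nn span_base[of "r n" "A \<union> r ` {..<n}"] by meson
  have i1: "independent (A \<union> r ` {..<Suc n})" unfolding eq by (rule i0)
  have "inj_on r (insert n {..<n})" using IH i2 by (simp add: inj_on_insert)
  then have i3: "inj_on r {..<Suc n}" by (simp only: lessThan_Suc)
  have i4: "A \<inter> r ` {..<Suc n} = {}" using IH i2 by (auto simp only: lessThan_Suc image_insert)
  show ?case using i1 i3 i4 by blast
qed

lemma span_Un_span: "span (span A \<union> B) = span (A \<union> B)"
proof (rule span_eq[THEN iffD2], rule conjI)
  show "span A \<union> B \<subseteq> span (A \<union> B)"
    using span_mono[of A "A \<union> B"] span_superset[of "A \<union> B"] by auto
  show "A \<union> B \<subseteq> span (span A \<union> B)"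
    using span_superset[of A] span_superset[of "span A \<union> B"] by auto
qed

lemma tri_bound:
  fixes t :: "nat \<Rightarrow> 'b"
  assumes fS: "finite S0" and tri: "\<And>k. k < n \<Longrightarrow> t k \<notin> span (L0 \<union> t ` {..<k})"
    and sub: "t ` {..<n} \<subseteq> span (L0 \<union> S0)"
  shows "n \<le> card S0"
proof -
  define r where "r k = (SOME y. y \<in> span S0 \<and> t k - y \<in> span L0)" for k
  have r: "r k \<in> span S0 \<and> t k - r k \<in> span L0" if "k < n" for k
  proof -
    have "t k \<in> span (L0 \<union> S0)" using sub that by auto
    then obtain x y where "t k = x + y" "x \<in> span L0" "y \<in> span S0" unfolding span_Un by auto
    then have "\<exists>y. y \<in> span S0 \<and> t k - y \<in> span L0" by (intro exI[of _ y]) auto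
    then show ?thesis unfolding r_def by (rule someI_ex)
  qed
  have tri2: "r k \<notin> span ({} \<union> r ` {..<k})" if k: "k < n" for k
  proof
    assume "r k \<in> span ({} \<union> r ` {..<k})"
    moreover have "r ` {..<k} \<subseteq> span (L0 \<union> t ` {..<k})"
    proof
      fix z assume "z \<in> r ` {..<k}"
      then obtain j where j: "j < k" "z = r j" by auto
      have a: "t j - r j \<in> span (L0 \<union> t ` {..<k})"
        using r[of j] j k span_mono[of L0 "L0 \<union> t ` {..<k}"] by auto
      have b: "t j \<in> span (L0 \<union> t ` {..<k})" using j by (intro span_base) auto
      have "t j - (t j - r j) \<in> span (L0 \<union> t ` {..<k})" using b a by (rule span_diff)
      then show "z \<in> span (L0 \<union> t ` {..<k})" using j by simp
    qed
    ultimately have c: "r k \<in> span (L0 \<union> t ` {..<k})"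
      using span_minimal[OF _ subspace_span, of "r ` {..<k}" "L0 \<union> t ` {..<k}"] by auto
    have d: "t k - r k \<in> span (L0 \<union> t ` {..<k})"
      using r[OF k] span_mono[of L0 "L0 \<union> t ` {..<k}"] by auto
    have "t k - r k + r k \<in> span (L0 \<union> t ` {..<k})" using d c by (rule span_add)
    then show False using tri[OF k] by simp
  qed
  have "independent ({} \<union> r ` {..<n}) \<and> inj_on r {..<n} \<and> {} \<inter> r ` {..<n} = {}"
    by (rule tri_indep) (use tri2 in \<open>auto simp: independent_empty\<close>)
  then have ind: "independent (r ` {..<n})" and inj: "inj_on r {..<n}" by auto
  have "r ` {..<n} \<subseteq> span S0" using r by auto
  from independent_span_bound[OF fS ind this] have "card (r ` {..<n}) \<le> card S0" by simp
  then show ?thesis using card_image[OF inj] by simp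
qed

lemma pow_in:
  assumes "u ` Q \<subseteq> Q" "x \<in> Q" shows "(u ^^ k) x \<in> Q"
  using assms by (induction k) auto

lemma stable_span:
  assumes "Vector_Spaces.linear scale scale u" "u ` X \<subseteq> span X"
  shows "u ` span X \<subseteq> span X"
  using lin_span_mono[OF assms] by blast

definition prefix_ok :: "('b \<Rightarrow> 'b) \<Rightarrow> 'b set \<Rightarrow> nat \<Rightarrow> (nat \<Rightarrow> 'b) \<Rightarrow> nat set \<Rightarrow> 'b set \<Rightarrow> bool" where
  "prefix_ok u Fm N y L T \<longleftrightarrow>
    (\<forall>m<N. y m \<notin> span (Fm \<union> y ` {..<m})) \<and> span (Fm \<union> y ` {..<N}) = T \<and>
    (\<forall>m<N. m \<notin> L \<longrightarrow> Suc m < N \<and> u (y m) = y (Suc m)) \<and>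
    (\<forall>m\<in>L. m < N \<and> u (y m) \<in> span (Fm \<union> y ` {..m}) \<and> Suc m \<notin> L)"

end

context vector_space begin

lemma prefix_seg:
  fixes D :: "'d::wellorder set" and M :: "'d \<Rightarrow> 'b set"
  assumes lin: "Vector_Spaces.linear scale scale u"
    and Fs: "subspace Fm" "u ` Fm \<subseteq> Fm"
    and S0: "finite S0" "W \<subseteq> span (Fm \<union> S0)"
    and st: "stratification_quot scale u W Fm D M" and pa: "PA_plus scale Fm D M"
  shows "finite A \<Longrightarrow> A \<subseteq> D \<Longrightarrow> (\<forall>\<alpha>\<in>A. \<forall>\<beta>\<in>D. \<beta> < \<alpha> \<longrightarrow> \<beta> \<in> A) \<Longrightarrow>
    \<exists>N y L. prefix_ok u Fm N y L (span (Fm \<union> (\<Union>\<alpha>\<in>A. M \<alpha>))) \<and> card A \<le> N"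
proof (induction A rule: finite_linorder_max_induct)
  case empty
  show ?case
    by (rule exI[of _ 0], rule exI[of _ "\<lambda>_. 0"], rule exI[of _ "{}"]) (simp add: prefix_ok_def)
next
  case (insert b A)
  have bD: "b \<in> D" and AD: "A \<subseteq> D" using insert.prems by auto
  have Ainit: "\<forall>\<alpha>\<in>A. \<forall>\<beta>\<in>D. \<beta> < \<alpha> \<longrightarrow> \<beta> \<in> A"
  proof (intro ballI impI)
    fix \<alpha> \<beta> assume h: "\<alpha> \<in> A" "\<beta> \<in> D" "\<beta> < \<alpha>"
    then have "\<beta> < b" using insert.hyps(2) by (meson less_trans)
    moreover have "\<beta> \<in> insert b A" using insert.prems(2) h by blast
    ultimately show "\<beta> \<in> A" by auto
  qed
  obtain N y L where pre: "prefix_ok u Fm N y L (span (Fm \<union> (\<Union>\<alpha>\<in>A. M \<alpha>)))" and cA: "card A \<le> N"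
    using insert.IH AD Ainit by blast
  have Aeq: "{\<beta>\<in>D. \<beta> < b} = A"
  proof
    show "{\<beta>\<in>D. \<beta> < b} \<subseteq> A"
    proof
      fix \<beta> assume h: "\<beta> \<in> {\<beta>\<in>D. \<beta> < b}"
      have "b \<in> insert b A" by simp
      then have "\<beta> \<in> insert b A" using insert.prems(2) h by blast
      then show "\<beta> \<in> A" using h by auto
    qed
    show "A \<subseteq> {\<beta>\<in>D. \<beta> < b}" using AD insert.hyps(2) by blast
  qed
  define Lb where "Lb = span (Fm \<union> (\<Union>\<alpha>\<in>A. M \<alpha>))"
  have below: "below scale Fm D M b = Lb" unfolding below_def Lb_def Aeq ..
  note sq = st[unfolded stratification_quot_def]
  have sq1: "\<forall>\<alpha>\<in>D. submod scale u (M \<alpha>) \<and> Fm \<subseteq> M \<alpha> \<and> M \<alpha> \<subseteq> W" using sq by (rule conjunct1)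
  have sq3: "\<forall>\<alpha>\<in>D. \<not> M \<alpha> \<subseteq> below scale Fm D M \<alpha>" using sq by (elim conjE)
  have sq4: "\<forall>\<alpha>\<in>D. \<exists>x\<in>M \<alpha>. M \<alpha> \<subseteq> span (below scale Fm D M \<alpha> \<union> range (\<lambda>k. (u ^^ k) x))"
    using sq by (elim conjE)
  have stM: "subspace (M \<alpha>) \<and> u ` M \<alpha> \<subseteq> M \<alpha> \<and> Fm \<subseteq> M \<alpha> \<and> M \<alpha> \<subseteq> W" if "\<alpha> \<in> D" for \<alpha>
  proof -
    have "submod scale u (M \<alpha>) \<and> Fm \<subseteq> M \<alpha> \<and> M \<alpha> \<subseteq> W" using sq1 that by (rule bspec)
    then show ?thesis unfolding submod_def by (elim conjE) (intro conjI)
  qed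
  have nsub: "\<not> M b \<subseteq> Lb" using sq3 bD below by metis
  obtain x where xM: "x \<in> M b" and Mx: "M b \<subseteq> span (Lb \<union> range (\<lambda>k. (u ^^ k) x))"
    using sq4 bD below by metis
  have Lbst: "u ` Lb \<subseteq> Lb"
  proof -
    have "u ` (Fm \<union> (\<Union>\<alpha>\<in>A. M \<alpha>)) \<subseteq> span (Fm \<union> (\<Union>\<alpha>\<in>A. M \<alpha>))"
    proof
      fix z assume "z \<in> u ` (Fm \<union> (\<Union>\<alpha>\<in>A. M \<alpha>))"
      then obtain w where w: "w \<in> Fm \<union> (\<Union>\<alpha>\<in>A. M \<alpha>)" "z = u w" by blast
      have "u w \<in> Fm \<union> (\<Union>\<alpha>\<in>A. M \<alpha>)"
      proof (cases "w \<in> Fm")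
        case True then show ?thesis using Fs(2) by blast
      next
        case False
        then obtain \<alpha> where a: "\<alpha> \<in> A" "w \<in> M \<alpha>" using w(1) by blast
        then have "\<alpha> \<in> D" using AD by blast
        then have "u ` M \<alpha> \<subseteq> M \<alpha>" using stM by blast
        then show ?thesis using a by blast
      qed
      then show "z \<in> span (Fm \<union> (\<Union>\<alpha>\<in>A. M \<alpha>))" using w(2) by (simp add: span_base)
    qed
    then show ?thesis unfolding Lb_def by (rule stable_span[OF lin])
  qed
  define t where "t k = (u ^^ k) x" for k
  have tM: "t k \<in> M b" for k unfolding t_def by (rule pow_in) (use stM[OF bD] xM in auto)
  have FLb: "Fm \<subseteq> Lb" unfolding Lb_def using span_superset[of "Fm \<union> (\<Union>\<alpha>\<in>A. M \<alpha>)"] by (rule subset_trans[rotated]) simp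
  define P where "P n \<longleftrightarrow> t n \<in> span (Lb \<union> t ` {..<n})" for n
  have exP: "\<exists>n. P n"
  proof (rule ccontr)
    assume "\<not> (\<exists>n. P n)"
    then have nP: "\<not> P k" for k by blast
    have "Suc (card S0) \<le> card S0"
    proof (rule tri_bound[OF S0(1), of "Suc (card S0)" t Fm])
      fix k assume "k < Suc (card S0)"
      have "span (Fm \<union> t ` {..<k}) \<subseteq> span (Lb \<union> t ` {..<k})" using FLb by (intro span_mono) blast
      then show "t k \<notin> span (Fm \<union> t ` {..<k})" using nP[of k] unfolding P_def by blast
    next
      show "t ` {..<Suc (card S0)} \<subseteq> span (Fm \<union> S0)" using tM stM[OF bD] S0(2) by blast
    qed
    then show False by simp
  qed
  define n where "n = (LEAST n. P n)"
  have Pn: "P n" unfolding n_def using exP by (rule LeastI_ex)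
  have nP: "\<not> P k" if "k < n" for k using that unfolding n_def by (rule not_less_Least)
  define Q where "Q = span (Lb \<union> t ` {..<n})"
  have LbQ: "Lb \<subseteq> Q" unfolding Q_def using span_superset[of "Lb \<union> t ` {..<n}"] by (rule subset_trans[rotated]) simp
  have Qst: "u ` Q \<subseteq> Q"
  proof -
    have "u ` (Lb \<union> t ` {..<n}) \<subseteq> span (Lb \<union> t ` {..<n})"
    proof
      fix z assume "z \<in> u ` (Lb \<union> t ` {..<n})"
      then obtain w where w: "w \<in> Lb \<union> t ` {..<n}" "z = u w" by blast
      show "z \<in> span (Lb \<union> t ` {..<n})"
      proof (cases "w \<in> Lb")
        case True
        then have "z \<in> Lb" using Lbst w(2) by blast
        then show ?thesis by (simp add: span_base)
      next
        case False
        then obtain k where k: "k < n" "w = t k" using w(1) by blast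
        have ut: "u (t k) = t (Suc k)" by (simp add: t_def)
        show ?thesis
        proof (cases "Suc k < n")
          case True
          then show ?thesis using w(2) k ut span_base[of "t (Suc k)" "Lb \<union> t ` {..<n}"] by auto
        next
          case False
          then have "Suc k = n" using k by simp
          then show ?thesis using Pn w(2) k ut unfolding P_def by simp
        qed
      qed
    qed
    then show ?thesis unfolding Q_def by (rule stable_span[OF lin])
  qed
  have MQ: "M b \<subseteq> Q" if "0 < n"
  proof -
    have "x = t 0" by (simp add: t_def)
    then have "x \<in> t ` {..<n}" using that by blast
    then have "x \<in> Q" unfolding Q_def by (intro span_base) blast
    then have "range (\<lambda>k. (u ^^ k) x) \<subseteq> Q" using pow_in[OF Qst] by blast
    then have "Lb \<union> range (\<lambda>k. (u ^^ k) x) \<subseteq> Q" using LbQ by blast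
    then have "span (Lb \<union> range (\<lambda>k. (u ^^ k) x)) \<subseteq> Q"
      unfolding Q_def by (rule span_minimal) simp
    then show ?thesis using Mx by blast
  qed
  have n0: "n \<noteq> 0"
  proof
    assume n0: "n = 0"
    then have "x \<in> span Lb" using Pn unfolding P_def by (simp add: t_def)
    then have xLb: "x \<in> Lb" unfolding Lb_def span_span .
    have "range (\<lambda>k. (u ^^ k) x) \<subseteq> Lb" using pow_in[OF Lbst xLb] by blast
    then have "Lb \<union> range (\<lambda>k. (u ^^ k) x) \<subseteq> Lb" by blast
    then have "span (Lb \<union> range (\<lambda>k. (u ^^ k) x)) \<subseteq> Lb"
      unfolding Lb_def by (rule span_minimal) simp
    then show False using Mx nsub by blast
  qed
  have n1: "n \<noteq> 1"
  proof
    assume n1: "n = 1"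
    have MQ1: "M b \<subseteq> span (Lb \<union> {x})" proof -
      have "t ` {..<n} = {x}" using n1 by (auto simp: t_def lessThan_Suc)
      then show ?thesis using MQ n1 unfolding Q_def by simp
    qed
    have ex: "\<exists>S. S \<subseteq> M b \<and> finite S \<and> M b \<subseteq> span (Lb \<union> S)"
      using MQ1 xM by (intro exI[of _ "{x}"]) auto
    have "(LEAST n. \<exists>S. S \<subseteq> M b \<and> finite S \<and> card S = n \<and> M b \<subseteq> span (Lb \<union> S)) \<le> 1"
      by (rule Least_le) (use MQ1 xM in \<open>intro exI[of _ "{x}"], auto\<close>)
    then have q1: "qdim scale (M b) Lb \<le> 1"
      unfolding qdim_def using ex by (simp add: one_enat_def)
    have prem: "(\<forall>\<beta>\<in>D. b \<le> \<beta>) \<or> (\<exists>\<beta>\<in>D. \<beta> < b \<and> \<not> (\<exists>\<gamma>\<in>D. \<beta> < \<gamma> \<and> \<gamma> < b))"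
    proof (cases "A = {}")
      case True
      then show ?thesis using Aeq by (auto simp: not_less)
    next
      case False
      have mA: "Max A \<in> A" using insert.hyps(1) False by (rule Max_in)
      show ?thesis
      proof (rule disjI2, rule bexI[of _ "Max A"], intro conjI notI)
        show "Max A < b" using mA insert.hyps(2) by blast
        fix ex assume "\<exists>\<gamma>\<in>D. Max A < \<gamma> \<and> \<gamma> < b"
        then obtain \<gamma> where g: "\<gamma> \<in> D" "Max A < \<gamma>" "\<gamma> < b" by blast
        then have "\<gamma> \<in> A" using Aeq by blast
        then have "\<gamma> \<le> Max A" using insert.hyps(1) by simp
        then show False using g by simp
      next
        show "Max A \<in> D" using mA AD by blast
      qed
    qed
    have "qdim scale (M b) (below scale Fm D M b) \<ge> 2"
      using pa bD prem unfolding PA_plus_def by blast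
    then have "enat 2 \<le> enat 1" using q1 below by (metis order_trans numeral_eq_enat one_enat_def)
    then show False by simp
  qed
  have n2: "2 \<le> n" using n0 n1 by simp
  define y' where "y' m = (if m < N then y m else t (m - N))" for m
  have preF: "\<forall>m<N. y m \<notin> span (Fm \<union> y ` {..<m})" "span (Fm \<union> y ` {..<N}) = Lb"
    "\<forall>m<N. m \<notin> L \<longrightarrow> Suc m < N \<and> u (y m) = y (Suc m)"
    "\<forall>m\<in>L. m < N \<and> u (y m) \<in> span (Fm \<union> y ` {..m}) \<and> Suc m \<notin> L"
    using pre unfolding prefix_ok_def Lb_def by blast+
  have im1: "y' ` {..<m} = y ` {..<m}" if "m \<le> N" for m
    using that unfolding y'_def by (auto intro!: image_cong)
  have im2: "y' ` {..m} = y ` {..m}" if "m < N" for m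
    using that unfolding y'_def by (auto intro!: image_cong)
  have im3: "y' ` {..<N + k} = y ` {..<N} \<union> t ` {..<k}" for k
  proof
    show "y' ` {..<N + k} \<subseteq> y ` {..<N} \<union> t ` {..<k}"
      unfolding y'_def by (auto simp: not_less)
    show "y ` {..<N} \<union> t ` {..<k} \<subseteq> y' ` {..<N + k}"
    proof
      fix z assume "z \<in> y ` {..<N} \<union> t ` {..<k}"
      then show "z \<in> y' ` {..<N + k}"
      proof
        assume "z \<in> y ` {..<N}"
        then obtain m where "m < N" "z = y m" by blast
        then show ?thesis unfolding y'_def by (intro image_eqI[of _ _ m]) auto
      next
        assume "z \<in> t ` {..<k}"
        then obtain j where "j < k" "z = t j" by blast
        then show ?thesis unfolding y'_def by (intro image_eqI[of _ _ "N + j"]) auto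
      qed
    qed
  qed
  have speq: "span (Fm \<union> y' ` {..<N + k}) = span (Lb \<union> t ` {..<k})" for k
  proof -
    have "span (Fm \<union> y' ` {..<N + k}) = span ((Fm \<union> y ` {..<N}) \<union> t ` {..<k})"
      unfolding im3 by (simp add: Un_assoc)
    also have "\<dots> = span (span (Fm \<union> y ` {..<N}) \<union> t ` {..<k})" by (rule span_Un_span[symmetric])
    also have "\<dots> = span (Lb \<union> t ` {..<k})" using preF(2) by simp
    finally show ?thesis .
  qed
  define L' where "L' = insert (N + n - 1) L"
  have QR: "Q = span (Fm \<union> (\<Union>\<alpha>\<in>insert b A. M \<alpha>))"
  proof
    have sR: "subspace (span (Fm \<union> (\<Union>\<alpha>\<in>insert b A. M \<alpha>)))" by simp
    have "Lb \<subseteq> span (Fm \<union> (\<Union>\<alpha>\<in>insert b A. M \<alpha>))" unfolding Lb_def by (intro span_mono) blast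
    moreover have "t ` {..<n} \<subseteq> span (Fm \<union> (\<Union>\<alpha>\<in>insert b A. M \<alpha>))"
    proof
      fix z assume "z \<in> t ` {..<n}"
      then have "z \<in> Fm \<union> (\<Union>\<alpha>\<in>insert b A. M \<alpha>)" using tM by blast
      then show "z \<in> span (Fm \<union> (\<Union>\<alpha>\<in>insert b A. M \<alpha>))" by (rule span_base)
    qed
    ultimately show "Q \<subseteq> span (Fm \<union> (\<Union>\<alpha>\<in>insert b A. M \<alpha>))"
      unfolding Q_def by (intro span_minimal[OF _ sR]) blast
    have "Fm \<union> (\<Union>\<alpha>\<in>insert b A. M \<alpha>) \<subseteq> Q"
    proof -
      have "Fm \<union> (\<Union>\<alpha>\<in>A. M \<alpha>) \<subseteq> Lb" unfolding Lb_def by (rule span_superset)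
      then show ?thesis using LbQ MQ n0 by blast
    qed
    then show "span (Fm \<union> (\<Union>\<alpha>\<in>insert b A. M \<alpha>)) \<subseteq> Q"
      unfolding Q_def by (rule span_minimal) simp
  qed
  have ok1: "\<forall>m<N + n. y' m \<notin> span (Fm \<union> y' ` {..<m})"
  proof (intro allI impI)
    fix m assume m: "m < N + n"
    show "y' m \<notin> span (Fm \<union> y' ` {..<m})"
    proof (cases "m < N")
      case True
      then show ?thesis using preF(1) im1[of m] by (simp add: y'_def)
    next
      case False
      then obtain k where k: "m = N + k" "k < n" using m by (metis add_diff_inverse_nat nat_add_left_cancel_less)
      have "y' m = t k" using k by (simp add: y'_def)
      then show ?thesis using speq[of k] nP[OF k(2)] k(1) unfolding P_def by simp
    qed
  qed
  have ok2: "span (Fm \<union> y' ` {..<N + n}) = span (Fm \<union> (\<Union>\<alpha>\<in>insert b A. M \<alpha>))"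
    using speq[of n] QR unfolding Q_def by simp
  have ok3: "\<forall>m<N + n. m \<notin> L' \<longrightarrow> Suc m < N + n \<and> u (y' m) = y' (Suc m)"
  proof (intro allI impI)
    fix m assume m: "m < N + n" and mL: "m \<notin> L'"
    show "Suc m < N + n \<and> u (y' m) = y' (Suc m)"
    proof (cases "m < N")
      case True
      then have "Suc m < N \<and> u (y m) = y (Suc m)" using preF(3) mL unfolding L'_def by blast
      then show ?thesis using True by (simp add: y'_def)
    next
      case False
      then obtain k where k: "m = N + k" "k < n" using m by (metis add_diff_inverse_nat nat_add_left_cancel_less)
      have "k \<noteq> n - 1" using mL k unfolding L'_def by auto
      then have "Suc k < n" using k by simp
      then show ?thesis using k by (simp add: y'_def t_def)
    qed
  qed
  have ok4: "\<forall>m\<in>L'. m < N + n \<and> u (y' m) \<in> span (Fm \<union> y' ` {..m}) \<and> Suc m \<notin> L'"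
  proof (intro ballI conjI)
    fix m assume mL: "m \<in> L'"
    show "m < N + n" using mL preF(4) n2 unfolding L'_def by fastforce
    show "Suc m \<notin> L'"
    proof
      assume sL: "Suc m \<in> L'"
      show False
      proof (cases "m = N + n - 1")
        case True
        then show False using sL preF(4) n2 unfolding L'_def by fastforce
      next
        case False
        then have "m \<in> L" using mL unfolding L'_def by blast
        then show False using sL preF(4) n2 unfolding L'_def by fastforce
      qed
    qed
    show "u (y' m) \<in> span (Fm \<union> y' ` {..m})"
    proof (cases "m = N + n - 1")
      case True
      have "\<not> m < N" "m - N = n - 1" using True n2 by simp_all
      then have e1: "y' m = t (n - 1)" by (simp add: y'_def)
      have "t n = t (Suc (n - 1))" using n2 by simp
      also have "\<dots> = u (t (n - 1))" by (simp add: t_def)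
      finally have e2: "u (t (n - 1)) = t n" by simp
      have e3: "{..m} = {..<N + n}" using True n2 by auto
      show ?thesis using Pn speq[of n] e1 e2 e3 unfolding P_def by simp
    next
      case False
      then have mL2: "m \<in> L" using mL unfolding L'_def by blast
      then have "m < N" "u (y m) \<in> span (Fm \<union> y ` {..m})" using preF(4) by auto
      then show ?thesis using im2[of m] by (simp add: y'_def)
    qed
  qed
  have ok: "prefix_ok u Fm (N + n) y' L' (span (Fm \<union> (\<Union>\<alpha>\<in>insert b A. M \<alpha>)))"
    unfolding prefix_ok_def using ok1 ok2 ok3 ok4 by blast
  have "b \<notin> A" using insert.hyps(2) by blast
  then have "card (insert b A) \<le> N + n" using cA n0 insert.hyps(1) by simp
  then show ?case using ok by blast
qed

end

context vector_space begin

lemma prefix_bound: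
  assumes "prefix_ok u Fm N y L T" "T \<subseteq> span (Fm \<union> S0)" "finite S0"
  shows "N \<le> card S0"
proof (rule tri_bound[OF assms(3), of N y Fm])
  fix k assume "k < N" then show "y k \<notin> span (Fm \<union> y ` {..<k})"
    using assms(1) unfolding prefix_ok_def by blast
next
  have "y ` {..<N} \<subseteq> span (Fm \<union> y ` {..<N})"
    using span_superset[of "Fm \<union> y ` {..<N}"] by blast
  also have "\<dots> = T" using assms(1) unfolding prefix_ok_def by blast
  finally show "y ` {..<N} \<subseteq> span (Fm \<union> S0)" using assms(2) by blast
qed

lemma prefix_exists:
  fixes D :: "'d::wellorder set" and M :: "'d \<Rightarrow> 'b set"
  assumes lin: "Vector_Spaces.linear scale scale u"
    and Fs: "subspace Fm" "u ` Fm \<subseteq> Fm" and FW: "Fm \<subseteq> W"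
    and S0: "finite S0" "W \<subseteq> span (Fm \<union> S0)"
    and st: "stratification_quot scale u W Fm D M" and pa: "PA_plus scale Fm D M"
  shows "\<exists>N y L. prefix_ok u Fm N y L W"
proof -
  note sq = st[unfolded stratification_quot_def]
  have sq1: "\<forall>\<alpha>\<in>D. submod scale u (M \<alpha>) \<and> Fm \<subseteq> M \<alpha> \<and> M \<alpha> \<subseteq> W" using sq by (rule conjunct1)
  have Weq: "W = span (Fm \<union> (\<Union>\<alpha>\<in>D. M \<alpha>))" using sq by (elim conjE)
  have sW: "subspace W" using Weq by simp
  have segb: "card A \<le> card S0" if A: "finite A" "A \<subseteq> D" "\<forall>\<alpha>\<in>A. \<forall>\<beta>\<in>D. \<beta> < \<alpha> \<longrightarrow> \<beta> \<in> A" for A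
  proof -
    obtain N y L where p: "prefix_ok u Fm N y L (span (Fm \<union> (\<Union>\<alpha>\<in>A. M \<alpha>)))" and c: "card A \<le> N"
      using prefix_seg[OF lin Fs S0 st pa A] by blast
    have "Fm \<union> (\<Union>\<alpha>\<in>A. M \<alpha>) \<subseteq> W" using FW sq1 A(2) by blast
    then have "span (Fm \<union> (\<Union>\<alpha>\<in>A. M \<alpha>)) \<subseteq> W" using sW by (rule span_minimal)
    then have "span (Fm \<union> (\<Union>\<alpha>\<in>A. M \<alpha>)) \<subseteq> span (Fm \<union> S0)" using S0(2) by blast
    from prefix_bound[OF p this S0(1)] c show ?thesis by simp
  qed
  have big: "False" if X: "finite X" "card X = Suc (card S0)" "X \<subseteq> D"
      and dn: "\<And>\<gamma>. \<gamma> \<in> X \<Longrightarrow> finite {\<beta>\<in>D. \<beta> < \<gamma>}" for X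
  proof -
    have Xne: "X \<noteq> {}" using X(2) by auto
    define \<gamma> where "\<gamma> = Max X"
    have gX: "\<gamma> \<in> X" unfolding \<gamma>_def using X(1) Xne by (rule Max_in)
    define A where "A = {\<beta>\<in>D. \<beta> \<le> \<gamma>}"
    have Aeq: "A = insert \<gamma> {\<beta>\<in>D. \<beta> < \<gamma>}" using gX X(3) unfolding A_def by auto
    have fA: "finite A" using dn[OF gX] Aeq by simp
    have AD: "A \<subseteq> D" unfolding A_def by blast
    have Ai: "\<forall>\<alpha>\<in>A. \<forall>\<beta>\<in>D. \<beta> < \<alpha> \<longrightarrow> \<beta> \<in> A" unfolding A_def by auto
    have XA: "X \<subseteq> A" unfolding A_def \<gamma>_def using X(1,3) by auto
    have "card X \<le> card A" using card_mono[OF fA XA] .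
    also have "\<dots> \<le> card S0" using segb[OF fA AD Ai] .
    finally show False using X(2) by simp
  qed
  have down: "finite {\<beta>\<in>D. \<beta> < \<alpha>}" for \<alpha>
  proof (induction \<alpha> rule: less_induct)
    case (less \<alpha>)
    show ?case
    proof (rule ccontr)
      assume inf: "infinite {\<beta>\<in>D. \<beta> < \<alpha>}"
      obtain X where X: "finite X" "card X = Suc (card S0)" "X \<subseteq> {\<beta>\<in>D. \<beta> < \<alpha>}"
        using infinite_arbitrarily_large[OF inf] by blast
      show False by (rule big[of X]) (use X less.IH in auto)
    qed
  qed
  have finD: "finite D"
  proof (rule ccontr)
    assume inf: "infinite D"
    obtain X where X: "finite X" "card X = Suc (card S0)" "X \<subseteq> D"
      using infinite_arbitrarily_large[OF inf] by blast
    show False by (rule big[OF X down])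
  qed
  obtain N y L where "prefix_ok u Fm N y L (span (Fm \<union> (\<Union>\<alpha>\<in>D. M \<alpha>)))"
    using prefix_seg[OF lin Fs S0 st pa finD order_refl] by blast
  then show ?thesis using Weq by auto
qed

lemma indep_countable:
  assumes "independent X" "countable B" "span B = UNIV"
  shows "countable X"
proof -
  let ?C = "{S. finite S \<and> S \<subseteq> B}"
  have cC: "countable ?C" using assms(2) by (rule countable_Collect_finite_subset)
  have "X \<subseteq> (\<Union>S\<in>?C. X \<inter> span S)"
  proof
    fix x assume xX: "x \<in> X"
    have "x \<in> span B" using assms(3) by simp
    then obtain S r where S: "finite S" "S \<subseteq> B" "x = (\<Sum>a\<in>S. r a *s a)"
      unfolding span_explicit by blast
    have "x \<in> span S" unfolding S(3) by (rule span_sum) (simp add: span_base span_scale)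
    then show "x \<in> (\<Union>S\<in>?C. X \<inter> span S)" using S xX by blast
  qed
  moreover have "countable (\<Union>S\<in>?C. X \<inter> span S)"
  proof (rule countable_UN[OF cC])
    fix S assume "S \<in> ?C"
    then have "finite S" by blast
    moreover have "independent (X \<inter> span S)" using assms(1) by (rule independent_mono) blast
    ultimately have "finite (X \<inter> span S)" using independent_span_bound[of S "X \<inter> span S"] by blast
    then show "countable (X \<inter> span S)" by (rule countable_finite)
  qed
  ultimately show ?thesis by (rule countable_subset)
qed

lemma indep_union:
  assumes "independent A" "independent B" "span A \<inter> span B = {0}"
  shows "independent (A \<union> B)"
  unfolding independent_explicit_finite_subsets
proof (rule allI, intro impI allI)
  fix S and c :: "'b \<Rightarrow> 'a"
  assume S: "S \<subseteq> A \<union> B" "finite S" "(\<Sum>v\<in>S. c v *s v) = 0"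
  let ?S1 = "S \<inter> A" and ?S2 = "S - A"
  have sp: "(\<Sum>v\<in>S. c v *s v) = (\<Sum>v\<in>?S1. c v *s v) + (\<Sum>v\<in>?S2. c v *s v)"
    using S(2) by (metis Diff_disjoint Int_Diff_Un Int_Diff_disjoint sum.union_disjoint finite_Int finite_Diff inf_commute)
  have a1: "(\<Sum>v\<in>?S1. c v *s v) \<in> span A" by (rule span_sum) (auto intro: span_scale span_base)
  have a2: "(\<Sum>v\<in>?S2. c v *s v) \<in> span B" by (rule span_sum) (use S(1) in \<open>auto intro: span_scale span_base\<close>)
  have e: "(\<Sum>v\<in>?S1. c v *s v) = - (\<Sum>v\<in>?S2. c v *s v)" using S(3) sp by (simp add: eq_neg_iff_add_eq_0)
  then have "(\<Sum>v\<in>?S1. c v *s v) \<in> span B" using a2 by (simp add: span_neg)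
  then have z1: "(\<Sum>v\<in>?S1. c v *s v) = 0" using a1 assms(3) by blast
  then have z2: "(\<Sum>v\<in>?S2. c v *s v) = 0" using e by simp
  have i1: "\<forall>v\<in>?S1. c v = 0"
    using assms(1) S(2) z1 unfolding independent_explicit_finite_subsets by blast
  have i2: "\<forall>v\<in>?S2. c v = 0"
    using assms(2) S(1,2) z2 unfolding independent_explicit_finite_subsets by blast
  show "\<forall>v\<in>S. c v = 0" using i1 i2 by blast
qed

end

context vector_space begin

lemma chain_elementary2:
  fixes e :: "'g \<Rightarrow> nat \<Rightarrow> 'b" and I :: "'g \<Rightarrow> nat set"
  assumes lin: "Vector_Spaces.linear scale scale s"
  and inf: "\<And>g. g \<in> G \<Longrightarrow> infinite (I g)"
  and inj: "inj_on (\<lambda>(g,n). e g n) (SIGMA g:G. I g)"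
  and ind: "independent ((\<lambda>(g,n). e g n) ` (SIGMA g:G. I g))"
  and sp: "span ((\<lambda>(g,n). e g n) ` (SIGMA g:G. I g)) = UNIV"
  and hs: "\<And>g n. g \<in> G \<Longrightarrow> n \<in> I g \<Longrightarrow>
     s (e g n) - e g (LEAST m. m \<in> I g \<and> n < m) \<in> span (e g ` {m \<in> I g. m \<le> n})"
  shows "elementary scale s"
proof -
  define e' where "e' g k = e g (enumerate (I g) k)" for g k
  define \<phi> where "\<phi> = (\<lambda>(g::'g, k::nat). (g, enumerate (I g) k))"
  have phim: "\<phi> ` (G \<times> UNIV) = (SIGMA g:G. I g)"
  proof
    show "\<phi> ` (G \<times> UNIV) \<subseteq> (SIGMA g:G. I g)" using inf by (auto simp: \<phi>_def enumerate_in_set)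
    show "(SIGMA g:G. I g) \<subseteq> \<phi> ` (G \<times> UNIV)"
    proof
      fix p assume "p \<in> (SIGMA g:G. I g)"
      then obtain g n where gn: "p = (g, n)" "g \<in> G" "n \<in> I g" by blast
      then obtain k where "enumerate (I g) k = n" using enumerate_Ex[OF inf] by blast
      then have "\<phi> (g, k) = p" using gn by (simp add: \<phi>_def)
      then show "p \<in> \<phi> ` (G \<times> UNIV)" using gn(2) by (intro image_eqI[of _ _ "(g,k)"]) auto
    qed
  qed
  have phinj: "inj_on \<phi> (G \<times> UNIV)"
  proof (rule inj_onI)
    fix p q assume pq: "p \<in> G \<times> UNIV" "q \<in> G \<times> UNIV" "\<phi> p = \<phi> q"
    obtain g k where p: "p = (g,k)" "g \<in> G" using pq(1) by blast
    obtain g' k' where q: "q = (g',k')" using pq(2) by blast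
    have h1: "\<phi> p = (g, enumerate (I g) k)" unfolding p(1) \<phi>_def by simp
    have h2: "\<phi> q = (g', enumerate (I g') k')" unfolding q \<phi>_def by simp
    have "(g, enumerate (I g) k) = (g', enumerate (I g') k')" using pq(3) h1 h2 by metis
    then have gg: "g = g'" and ee0: "enumerate (I g) k = enumerate (I g') k'"
      using Pair_inject by blast+
    have ee: "enumerate (I g) k = enumerate (I g) k'" using ee0 unfolding gg .
    have "k = k'" using inj_enumerate[OF inf[OF p(2)]] ee unfolding inj_def by blast
    then show "p = q" using p q gg by simp
  qed
  have comp: "(\<lambda>(g,k). e' g k) = (\<lambda>(g,n). e g n) \<circ> \<phi>" by (rule ext) (simp add: e'_def \<phi>_def split: prod.splits)
  have im: "(\<lambda>(g,k). e' g k) ` (G \<times> UNIV) = (\<lambda>(g,n). e g n) ` (SIGMA g:G. I g)"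
    unfolding comp image_comp[symmetric] phim ..
  have inj': "inj_on (\<lambda>(g,k). e' g k) (G \<times> UNIV)"
    unfolding comp by (rule comp_inj_on[OF phinj]) (simp add: phim inj)
  show ?thesis
  proof (rule chain_elementary[OF lin inj'])
    show "independent ((\<lambda>(g,k). e' g k) ` (G \<times> UNIV))" unfolding im by (rule ind)
    show "span ((\<lambda>(g,k). e' g k) ` (G \<times> UNIV)) = UNIV" unfolding im by (rule sp)
    fix g k assume g: "g \<in> G"
    have i: "infinite (I g)" using inf[OF g] .
    have s1: "enumerate (I g) (Suc k) = (LEAST m. m \<in> I g \<and> enumerate (I g) k < m)"
      using enumerate_Suc''[OF i] .
    have s2: "{m \<in> I g. m \<le> enumerate (I g) k} = enumerate (I g) ` {..k}"
    proof
      show "{m \<in> I g. m \<le> enumerate (I g) k} \<subseteq> enumerate (I g) ` {..k}"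
      proof
        fix m assume m: "m \<in> {m \<in> I g. m \<le> enumerate (I g) k}"
        then obtain j where j: "enumerate (I g) j = m" using enumerate_Ex[OF i] by blast
        then have "j \<le> k" using m i by auto
        then show "m \<in> enumerate (I g) ` {..k}" using j by blast
      qed
      show "enumerate (I g) ` {..k} \<subseteq> {m \<in> I g. m \<le> enumerate (I g) k}"
        using i by (auto simp: enumerate_in_set)
    qed
    have "s (e g (enumerate (I g) k)) - e g (LEAST m. m \<in> I g \<and> enumerate (I g) k < m)
       \<in> span (e g ` {m \<in> I g. m \<le> enumerate (I g) k})"
      by (rule hs[OF g enumerate_in_set[OF i]])
    then show "s (e' g k) - e' g (Suc k) \<in> span (e' g ` {..k})"
      unfolding e'_def s1 s2 image_comp by (simp add: comp_def)
  qed
qed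

end

context vector_space begin
interpretation vp: vector_space_pair scale scale by unfold_locales

lemma least_next1: "Suc n \<in> S \<Longrightarrow> (LEAST m. m \<in> S \<and> n < m) = Suc n"
  by (rule Least_equality) auto

lemma least_next2: "Suc n \<notin> S \<Longrightarrow> Suc (Suc n) \<in> S \<Longrightarrow> (LEAST m. m \<in> S \<and> n < m) = Suc (Suc n)"
proof (rule Least_equality)
  show "\<And>y. Suc n \<notin> S \<Longrightarrow> y \<in> S \<and> n < y \<Longrightarrow> Suc (Suc n) \<le> y"
  proof -
    fix y assume "Suc n \<notin> S" "y \<in> S \<and> n < y"
    then have "y \<noteq> Suc n" "n < y" by auto
    then show "Suc (Suc n) \<le> y" by simp
  qed
qed auto

lemma parity_aux: "Suc (K + 2 * i) \<noteq> K + 2 * (j::nat)" by presburger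

lemma main_construction:
  fixes u :: "'b \<Rightarrow> 'b" and lam a :: 'a and Bf Hb W H Fm :: "'b set" and b0 :: 'b
  assumes lin: "Vector_Spaces.linear scale scale u"
    and Fs: "subspace Fm"
    and Bfinj: "inj_on (\<lambda>(b,k). (u ^^ k) b) (Bf \<times> UNIV)"
    and Bfind: "independent ((\<lambda>(b,k). (u ^^ k) b) ` (Bf \<times> UNIV))"
    and Bfsp: "span ((\<lambda>(b,k). (u ^^ k) b) ` (Bf \<times> UNIV)) = Fm"
    and b0: "b0 \<in> Bf"
    and pre: "prefix_ok u Fm N y L W"
    and sH: "subspace H" and WH: "W \<inter> H = {0}" and WHs: "span (W \<union> H) = UNIV"
    and Hbi: "independent Hb" and Hbs: "span Hb = H" and Hbc: "countable Hb"
    and Heig: "\<forall>x\<in>H. u x = lam *s x"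
  shows "\<exists>v. Vector_Spaces.linear scale scale v \<and> (\<forall>x. v (v x) = a *s v x) \<and>
             elementary scale (\<lambda>x. u x - v x)"
proof -
  define Fv where "Fv = (\<lambda>(b,k). (u ^^ k) b) ` (Bf \<times> UNIV)"
  define c where "c k = (u ^^ k) b0" for k
  define Y where "Y = y ` {..<N}"
  define E where "E = Fv \<union> Y \<union> Hb"
  have preF: "\<forall>m<N. y m \<notin> span (Fm \<union> y ` {..<m})" "span (Fm \<union> y ` {..<N}) = W"
    "\<forall>m<N. m \<notin> L \<longrightarrow> Suc m < N \<and> u (y m) = y (Suc m)"
    "\<forall>m\<in>L. m < N \<and> u (y m) \<in> span (Fm \<union> y ` {..m}) \<and> Suc m \<notin> L"
    using pre unfolding prefix_ok_def by blast+
  have spFv: "span (Fv \<union> X) = span (Fm \<union> X)" for X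
    using span_Un_span[of Fv X] Bfsp unfolding Fv_def by simp
  have tri: "independent (Fv \<union> y ` {..<N}) \<and> inj_on y {..<N} \<and> Fv \<inter> y ` {..<N} = {}"
    by (rule tri_indep) (use Bfind preF(1) spFv in \<open>auto simp: Fv_def\<close>)
  have FYi: "independent (Fv \<union> Y)" and yinj: "inj_on y {..<N}" and FYd: "Fv \<inter> Y = {}"
    using tri unfolding Y_def by blast+
  have spFY: "span (Fv \<union> Y) = W" using spFv[of Y] preF(2) unfolding Y_def by simp
  have Ei: "independent E" unfolding E_def
    by (rule indep_union[OF FYi Hbi]) (use spFY Hbs WH in simp)
  have Es: "span E = UNIV"
  proof -
    have "W \<union> H \<subseteq> span E" unfolding E_def using spFY Hbs span_mono[of "Fv \<union> Y" "Fv \<union> Y \<union> Hb"]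
      span_mono[of Hb "Fv \<union> Y \<union> Hb"] by blast
    then have "span (W \<union> H) \<subseteq> span E" by (rule span_minimal) simp
    then show ?thesis using WHs by blast
  qed
  have HbFY: "Hb \<inter> (Fv \<union> Y) = {}"
  proof (rule ccontr)
    assume "Hb \<inter> (Fv \<union> Y) \<noteq> {}"
    then obtain z where z: "z \<in> Hb" "z \<in> Fv \<union> Y" by blast
    have "z \<in> H" using z(1) Hbs span_superset by blast
    moreover have "z \<in> W" using z(2) spFY span_superset by blast
    ultimately have "z = 0" using WH by blast
    then show False using z(1) Hbi dependent_zero by blast
  qed
  have uFv: "b \<in> Bf \<Longrightarrow> (u ^^ k) b \<in> Fv" for b k unfolding Fv_def by (rule image_eqI[of _ _ "(b,k)"]) auto
  have cFv: "c k \<in> Fv" for k unfolding c_def using b0 by (rule uFv)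
  have Fvinj: "b = b' \<and> k = k'" if "b \<in> Bf" "b' \<in> Bf" "(u ^^ k) b = (u ^^ k') b'" for b b' k k'
  proof -
    have "(b,k) = (b',k')" by (rule inj_onD[OF Bfinj]) (use that in auto)
    then show ?thesis by simp
  qed
  have FvE: "\<exists>b k. b \<in> Bf \<and> e = (u ^^ k) b" if "e \<in> Fv" for e using that unfolding Fv_def by auto
  have cinj: "c k = c k' \<Longrightarrow> k = k'" for k k' using Fvinj[OF b0 b0] unfolding c_def by blast
  have yY: "m < N \<Longrightarrow> y m \<in> Y" for m unfolding Y_def by blast
  have cY: "c k \<notin> Y" for k using cFv FYd by blast
  have cH: "c k \<notin> Hb" for k using cFv HbFY by blast
  have yH: "m < N \<Longrightarrow> y m \<notin> Hb" for m using yY HbFY by blast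
  have HY: "h \<in> Hb \<Longrightarrow> h \<notin> Y" for h using HbFY by blast
  have uY: "b \<in> Bf \<Longrightarrow> (u ^^ k) b \<notin> Y" for b k using uFv FYd by blast
  have uH: "b \<in> Bf \<Longrightarrow> (u ^^ k) b \<notin> Hb" for b k using uFv HbFY by blast

  define \<iota> where "\<iota> = to_nat_on Hb"
  have \<iota>inj: "inj_on \<iota> Hb" unfolding \<iota>_def using Hbc by (rule inj_on_to_nat_on)
  have dec: "\<exists>f. f \<in> Fm \<and> u (y m) - f \<in> span (y ` {..m})" if "m \<in> L" for m
  proof -
    have "u (y m) \<in> span (Fm \<union> y ` {..m})" using preF(4) that by blast
    then obtain f z where fz: "u (y m) = f + z" "f \<in> span Fm" "z \<in> span (y ` {..m})" unfolding span_Un by blast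
    have spF: "span Fm = Fm" by (rule span_subspace[OF order_refl span_superset Fs])
    have "f \<in> Fm" using fz(2) unfolding spF .
    then show ?thesis using fz by (intro exI[of _ f]) auto
  qed
  define fm where "fm m = (SOME f. f \<in> Fm \<and> u (y m) - f \<in> span (y ` {..m}))" for m
  have fmF: "fm m \<in> Fm" and ppS: "u (y m) - fm m \<in> span (y ` {..m})" if "m \<in> L" for m
    using someI_ex[OF dec[OF that]] unfolding fm_def by blast+
  have finS: "\<exists>S. finite S \<and> S \<subseteq> Fv \<and> fm m \<in> span S" if "m \<in> L" for m
  proof -
    have "fm m \<in> span Fv" using fmF[OF that] Bfsp unfolding Fv_def by simp
    then obtain S r where S: "finite S" "S \<subseteq> Fv" "fm m = (\<Sum>a\<in>S. r a *s a)" unfolding span_explicit by blast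
    have "fm m \<in> span S" unfolding S(3) by (rule span_sum) (simp add: span_base span_scale)
    then show ?thesis using S by blast
  qed
  define Sm where "Sm m = (SOME S. finite S \<and> S \<subseteq> Fv \<and> fm m \<in> span S)" for m
  have Sm: "finite (Sm m) \<and> Sm m \<subseteq> Fv \<and> fm m \<in> span (Sm m)" if "m \<in> L" for m
    using someI_ex[OF finS[OF that]] unfolding Sm_def .
  define Sall where "Sall = (\<Union>m\<in>L. Sm m)"
  have finL: "finite L"
  proof (rule finite_subset)
    show "L \<subseteq> {..<N}" using preF(4) by blast
  qed simp
  have fSall: "finite Sall" unfolding Sall_def using finL Sm by blast
  have fK: "finite {k. c k \<in> Sall}"
  proof -
    have "inj c" using cinj unfolding inj_def by blast
    then have "finite (c -` Sall)" using fSall by (simp add: finite_vimageI)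
    then show ?thesis by (simp add: vimage_def)
  qed
  define K where "K = Suc (Max (insert 0 {k. c k \<in> Sall}))"
  have Kbig: "k < K" if "c k \<in> Sall" for k
  proof -
    have "k \<le> Max (insert 0 {k. c k \<in> Sall})" using fK that by (intro Max_ge) auto
    then show ?thesis unfolding K_def by simp
  qed
  have K1: "0 < K" unfolding K_def by simp
  define ins where "ins h = K + 2 * \<iota> h" for h
  define Ki where "Ki = ins ` Hb"
  have insinj: "h = h'" if "h \<in> Hb" "h' \<in> Hb" "ins h = ins h'" for h h'
    using \<iota>inj that unfolding ins_def inj_on_def by simp
  have Ki0: "0 \<notin> Ki" using K1 unfolding Ki_def ins_def by auto
  have KiS: "Suc k \<notin> Ki" if "k \<in> Ki" for k using that parity_aux unfolding Ki_def ins_def by blast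
  have KiSall: "k \<notin> Ki" if "c k \<in> Sall" for k using Kbig[OF that] unfolding Ki_def ins_def by auto
  define wh where "wh h = (a - 1) *s c (ins h) + c (Suc (ins h)) - h" for h
  define nx where "nx m = (if Suc m < N then y (Suc m) else c 0)" for m
  define my where "my e = (THE m. m < N \<and> y m = e)" for e
  define hi where "hi e = (THE h. h \<in> Hb \<and> c (ins h) = e)" for e
  define vb where "vb e = (if e \<in> Y then (if my e \<in> L then fm (my e) + a *s e - nx (my e) else 0)
      else if e \<in> Hb then - wh e else if e \<in> c ` Ki then wh (hi e) else 0)" for e
  define v where "v = vp.construct E vb"
  have vlin: "Vector_Spaces.linear scale scale v" unfolding v_def by (rule vp.linear_construct[OF Ei])
  have vE: "v e = vb e" if "e \<in> E" for e unfolding v_def using Ei that by (rule vp.construct_basis)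
  have myy: "my (y m) = m" if "m < N" for m
    unfolding my_def by (rule the_equality) (use yinj that in \<open>auto simp: inj_on_def\<close>)
  have hic: "hi (c (ins h)) = h" if "h \<in> Hb" for h
    unfolding hi_def by (rule the_equality) (use that insinj cinj in auto)
  have V1: "v (y m) = (if m \<in> L then fm m + a *s y m - nx m else 0)" if "m < N" for m
  proof -
    have "y m \<in> E" unfolding E_def using yY[OF that] by blast
    then show ?thesis using vE yY[OF that] myy[OF that] unfolding vb_def by simp
  qed
  have V2: "v h = - wh h" if "h \<in> Hb" for h
  proof -
    have "h \<in> E" unfolding E_def using that by blast
    then show ?thesis using vE HY[OF that] that unfolding vb_def by simp
  qed
  have V3: "v (c (ins h)) = wh h" if "h \<in> Hb" for h
  proof -
    have "c (ins h) \<in> E" unfolding E_def using cFv by blast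
    moreover have "c (ins h) \<in> c ` Ki" unfolding Ki_def using that by blast
    ultimately show ?thesis using vE cY cH hic[OF that] unfolding vb_def by simp
  qed
  have V4: "v (c k) = 0" if "k \<notin> Ki" for k
  proof -
    have "c k \<in> E" unfolding E_def using cFv by blast
    moreover have "c k \<notin> c ` Ki" using that cinj by blast
    ultimately show ?thesis using vE cY cH unfolding vb_def by simp
  qed
  have V5: "v ((u ^^ k) b) = 0" if "b \<in> Bf" "b \<noteq> b0" for b k
  proof -
    have "(u ^^ k) b \<in> E" unfolding E_def using uFv[OF that(1)] by blast
    moreover have "(u ^^ k) b \<notin> c ` Ki"
    proof
      assume "(u ^^ k) b \<in> c ` Ki"
      then obtain j where "(u ^^ k) b = (u ^^ j) b0" unfolding c_def by blast
      then show False using Fvinj[OF that(1) b0] that(2) by blast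
    qed
    ultimately show ?thesis using vE uY[OF that(1)] uH[OF that(1)] unfolding vb_def by simp
  qed
  note lf = lin_facts[OF vlin]
  have vS: "v (fm m) = 0" if "m \<in> L" for m
  proof -
    have "v (fm m) = (\<lambda>_. 0) (fm m)"
    proof (rule lin_eq_span[OF vlin vp.linear_zero])
      show "fm m \<in> span (Sm m)" using Sm[OF that] by blast
      fix e assume e: "e \<in> Sm m"
      then have eF: "e \<in> Fv" using Sm[OF that] by blast
      then obtain b k where bk: "b \<in> Bf" "e = (u ^^ k) b" using FvE by blast
      show "v e = 0"
      proof (cases "b = b0")
        case True
        then have ec: "e = c k" using bk unfolding c_def by simp
        then have "c k \<in> Sall" using e that unfolding Sall_def by blast
        then show ?thesis using V4 KiSall ec by simp
      next
        case False then show ?thesis using V5 bk by simp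
      qed
    qed
    then show ?thesis by simp
  qed
  have vnx: "v (nx m) = 0" if "m \<in> L" for m
  proof (cases "Suc m < N")
    case True
    have "Suc m \<notin> L" using preF(4) that by blast
    then show ?thesis using V1[OF True] True unfolding nx_def by simp
  next
    case False then show ?thesis using V4[OF Ki0] unfolding nx_def by simp
  qed
  have vwh: "v (wh h) = a *s wh h" if "h \<in> Hb" for h
  proof -
    have "v (wh h) = (a - 1) *s v (c (ins h)) + v (c (Suc (ins h))) - v h" unfolding wh_def by (simp add: lf)
    also have "\<dots> = (a - 1) *s wh h + wh h"
      using V3[OF that] V4[OF KiS] V2[OF that] that unfolding Ki_def by simp
    also have "\<dots> = a *s wh h" by (simp add: scale_left_diff_distrib)
    finally show ?thesis .
  qed
  have lin_vv: "Vector_Spaces.linear scale scale (\<lambda>x. v (v x))"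
    using Vector_Spaces.linear_compose[OF vlin vlin] by (simp add: comp_def)
  have lin_av: "Vector_Spaces.linear scale scale (\<lambda>x. a *s v x)" by (rule vp.linear_compose_scale_right[OF vlin])
  have vv: "v (v x) = a *s v x" for x
  proof (rule lin_eq_span[OF lin_vv lin_av])
    show "x \<in> span E" using Es by simp
    fix e assume e: "e \<in> E"
    show "v (v e) = a *s v e"
    proof (cases "e \<in> Fv")
      case True
      then obtain b k where bk: "b \<in> Bf" "e = (u ^^ k) b" using FvE by blast
      show ?thesis
      proof (cases "b = b0")
        case True
        then have ec: "e = c k" using bk unfolding c_def by simp
        show ?thesis
        proof (cases "k \<in> Ki")
          case True
          then obtain h where h: "h \<in> Hb" "k = ins h" unfolding Ki_def by blast
          then show ?thesis using ec V3 vwh by simp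
        next
          case False then show ?thesis using ec V4 lf by simp
        qed
      next
        case False then show ?thesis using V5 bk lf by simp
      qed
    next
      case nF: False
      show ?thesis
      proof (cases "e \<in> Y")
        case True
        then obtain m where m: "m < N" "e = y m" unfolding Y_def by blast
        show ?thesis
        proof (cases "m \<in> L")
          case True
          have "v (v e) = v (fm m) + a *s v (y m) - v (nx m)" using V1[OF m(1)] True m(2) by (simp add: lf)
          then show ?thesis using vS[OF True] vnx[OF True] m(2) by simp
        next
          case False then show ?thesis using V1[OF m(1)] m(2) lf by simp
        qed
      next
        case False
        then have eH: "e \<in> Hb" using e nF unfolding E_def by blast
        then show ?thesis using V2 vwh lf by simp
      qed
    qed
  qed

  define s where "s x = u x - v x" for x
  have slin: "Vector_Spaces.linear scale scale s"
    unfolding s_def by (rule vp.linear_compose_sub[OF lin vlin])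
  have uc: "u (c k) = c (Suc k)" for k by (simp add: c_def)
  define Wt where "Wt = {..<N} \<union> range (\<lambda>k. N + 2 * k) \<union> (\<lambda>h. Suc (N + 2 * ins h)) ` Hb"
  define elem where "elem w = (if w < N then y w else if even (w - N) then c ((w - N) div 2)
      else (THE h. h \<in> Hb \<and> Suc (N + 2 * ins h) = w))" for w
  have E1: "elem w = y w" if "w < N" for w unfolding elem_def using that by simp
  have E2: "elem (N + 2 * k) = c k" for k unfolding elem_def by simp
  have E3: "elem (Suc (N + 2 * ins h)) = h" if h: "h \<in> Hb" for h
  proof -
    have "\<not> Suc (N + 2 * ins h) < N" "\<not> even (Suc (N + 2 * ins h) - N)" by simp_all
    then have "elem (Suc (N + 2 * ins h)) = (THE h'. h' \<in> Hb \<and> Suc (N + 2 * ins h') = Suc (N + 2 * ins h))"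
      unfolding elem_def by simp
    also have "\<dots> = h" by (rule the_equality) (use h insinj in auto)
    finally show ?thesis .
  qed
  have W1: "m \<in> Wt" if "m < N" for m unfolding Wt_def using that by blast
  have W2: "N + 2 * k \<in> Wt" for k unfolding Wt_def by blast
  have W3: "Suc (N + 2 * ins h) \<in> Wt" if "h \<in> Hb" for h unfolding Wt_def using that by blast
  have W4: "Suc (N + 2 * k) \<notin> Wt" if kK: "k \<notin> Ki" for k
  proof
    assume "Suc (N + 2 * k) \<in> Wt"
    then consider (a) "Suc (N + 2 * k) < N" | (b) k' where "Suc (N + 2 * k) = N + 2 * k'"
      | (c) h where "h \<in> Hb" "Suc (N + 2 * k) = Suc (N + 2 * ins h)" unfolding Wt_def by blast
    then show False
    proof cases
      case a then show ?thesis by simp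
    next
      case (b k') then show ?thesis using parity_aux[of N k k'] by simp
    next
      case (c h) then have "k = ins h" by simp
      then show ?thesis using kK c(1) unfolding Ki_def by blast
    qed
  qed
  have kind: "(n < N) \<or> (\<exists>k. n = N + 2 * k) \<or> (\<exists>h\<in>Hb. n = Suc (N + 2 * ins h))" if "n \<in> Wt" for n
    using that unfolding Wt_def by blast
  define G where "G = insert None (Some ` (Bf - {b0}))"
  define I where "I g = (if g = None then Wt else UNIV)" for g :: "'b option"
  define eC where "eC g n = (case g of None \<Rightarrow> elem n | Some b \<Rightarrow> (u ^^ n) b)" for g n
  have eN: "eC None n = elem n" for n unfolding eC_def by simp
  have eS: "eC (Some b) n = (u ^^ n) b" for b n unfolding eC_def by simp
  have IN: "I None = Wt" unfolding I_def by simp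
  have IS: "I (Some b) = UNIV" for b unfolding I_def by simp
  have elemE: "elem n \<in> Y \<and> n < N \<or> (\<exists>k. n = N + 2 * k \<and> elem n = c k) \<or> (\<exists>h\<in>Hb. n = Suc (N + 2 * ins h) \<and> elem n = h)"
    if nW0: "n \<in> Wt" for n
  proof -
    consider (a) "n < N" | (b) k where "n = N + 2 * k" | (c) h where "h \<in> Hb" "n = Suc (N + 2 * ins h)"
      using kind[OF nW0] by blast
    then show ?thesis
    proof cases
      case a then show ?thesis using E1 yY by simp
    next
      case (b k) then show ?thesis using E2 by blast
    next
      case (c h) then show ?thesis using E3 by blast
    qed
  qed
  have elinj: "n = n'" if n: "n \<in> Wt" "n' \<in> Wt" "elem n = elem n'" for n n'
  proof -
    consider (a) "n < N" | (b) k where "n = N + 2 * k" | (c) h where "h \<in> Hb" "n = Suc (N + 2 * ins h)"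
      using kind[OF n(1)] by blast
    then show ?thesis
    proof cases
      case a
      consider (a') "n' < N" | (b') k' where "n' = N + 2 * k'" | (c') h' where "h' \<in> Hb" "n' = Suc (N + 2 * ins h')"
        using kind[OF n(2)] by blast
      then show ?thesis
      proof cases
        case a' then show ?thesis using a n(3) E1 yinj unfolding inj_on_def by simp
      next
        case (b' k') then show ?thesis using a n(3) E1 E2 yY cY by metis
      next
        case (c' h') then show ?thesis using a n(3) E1 E3 yH by metis
      qed
    next
      case (b k)
      consider (a') "n' < N" | (b') k' where "n' = N + 2 * k'" | (c') h' where "h' \<in> Hb" "n' = Suc (N + 2 * ins h')"
        using kind[OF n(2)] by blast
      then show ?thesis
      proof cases
        case a' then show ?thesis using b n(3) E1 E2 yY cY by metis
      next
        case (b' k') then show ?thesis using b n(3) E2 cinj by metis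
      next
        case (c' h') then show ?thesis using b n(3) E2 E3 cH by metis
      qed
    next
      case (c h)
      consider (a') "n' < N" | (b') k' where "n' = N + 2 * k'" | (c') h' where "h' \<in> Hb" "n' = Suc (N + 2 * ins h')"
        using kind[OF n(2)] by blast
      then show ?thesis
      proof cases
        case a' then show ?thesis using c n(3) E1 E3 yH by metis
      next
        case (b' k') then show ?thesis using c n(3) E2 E3 cH by metis
      next
        case (c' h') then show ?thesis using c n(3) E3 by metis
      qed
    qed
  qed
  have elnot: "elem n \<noteq> (u ^^ k) b" if hh: "n \<in> Wt" "b \<in> Bf" "b \<noteq> b0" for n k b
  proof
    assume eq: "elem n = (u ^^ k) b"
    consider (a) "n < N" | (b) j where "n = N + 2 * j" | (c) h where "h \<in> Hb" "n = Suc (N + 2 * ins h)"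
      using kind[OF hh(1)] by blast
    then show False
    proof cases
      case a then show ?thesis using eq E1 yY uY[OF hh(2)] by metis
    next
      case (b j)
      then have "(u ^^ j) b0 = (u ^^ k) b" using eq E2 unfolding c_def by metis
      then show ?thesis using Fvinj[OF b0 hh(2)] hh(3) by blast
    next
      case (c h) then show ?thesis using eq E3 uH[OF hh(2)] by metis
    qed
  qed
  have injC: "inj_on (\<lambda>(g,n). eC g n) (SIGMA g:G. I g)"
  proof (rule inj_onI)
    fix p q assume p: "p \<in> (SIGMA g:G. I g)" and q: "q \<in> (SIGMA g:G. I g)"
      and eq: "(\<lambda>(g,n). eC g n) p = (\<lambda>(g,n). eC g n) q"
    obtain g n where pp: "p = (g, n)" "g \<in> G" "n \<in> I g" using p by blast
    obtain g' n' where qq: "q = (g', n')" "g' \<in> G" "n' \<in> I g'" using q by blast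
    have eq2: "eC g n = eC g' n'" using eq pp(1) qq(1) by simp
    show "p = q"
    proof (cases g)
      case None
      then have nW: "n \<in> Wt" using pp IN by simp
      show ?thesis
      proof (cases g')
        case None
        then show ?thesis using elinj[OF nW] qq IN eq2 eN pp \<open>g = None\<close> by simp
      next
        case (Some b')
        then have "b' \<in> Bf" "b' \<noteq> b0" using qq(2) unfolding G_def by auto
        then show ?thesis using elnot[OF nW] eq2 eN eS \<open>g = None\<close> Some by metis
      qed
    next
      case (Some b)
      then have b: "b \<in> Bf" "b \<noteq> b0" using pp(2) unfolding G_def by auto
      show ?thesis
      proof (cases g')
        case None
        then have nW: "n' \<in> Wt" using qq IN by simp
        then show ?thesis using elnot[OF nW b] eq2 eN eS Some None by metis
      next
        case (Some b')
        then have "b' \<in> Bf" using qq(2) unfolding G_def by auto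
        then have "b = b' \<and> n = n'" using Fvinj[OF b(1)] eq2 eS \<open>g = Some b\<close> Some by metis
        then show ?thesis using pp(1) qq(1) \<open>g = Some b\<close> Some by simp
      qed
    qed
  qed
  have imC: "(\<lambda>(g,n). eC g n) ` (SIGMA g:G. I g) = E"
  proof
    show "(\<lambda>(g,n). eC g n) ` (SIGMA g:G. I g) \<subseteq> E"
    proof
      fix z assume "z \<in> (\<lambda>(g,n). eC g n) ` (SIGMA g:G. I g)"
      then obtain p where p: "p \<in> (SIGMA g:G. I g)" "z = (\<lambda>(g,n). eC g n) p" by (rule imageE)
      obtain g n where gn: "g \<in> G" "n \<in> I g" "z = eC g n" using p by (cases p) auto
      show "z \<in> E"
      proof (cases g)
        case None
        then have nW: "n \<in> Wt" using gn IN by simp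
        have "elem n \<in> E" using elemE[OF nW] cFv unfolding E_def by (elim disjE exE bexE conjE) auto
        then show ?thesis using gn None eN by simp
      next
        case (Some b)
        then have "b \<in> Bf" using gn(1) unfolding G_def by auto
        then show ?thesis using gn Some eS uFv unfolding E_def by simp
      qed
    qed
    show "E \<subseteq> (\<lambda>(g,n). eC g n) ` (SIGMA g:G. I g)"
    proof
      fix z assume z: "z \<in> E"
      have NG: "None \<in> G" unfolding G_def by simp
      show "z \<in> (\<lambda>(g,n). eC g n) ` (SIGMA g:G. I g)"
      proof (cases "z \<in> Fv")
        case True
        then obtain b k where bk: "b \<in> Bf" "z = (u ^^ k) b" using FvE by blast
        show ?thesis
        proof (cases "b = b0")
          case True
          then have "z = eC None (N + 2 * k)" using bk eN E2 unfolding c_def by simp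
          then show ?thesis using NG W2 IN by (intro image_eqI[of _ _ "(None, N + 2 * k)"]) auto
        next
          case False
          then have "Some b \<in> G" using bk unfolding G_def by blast
          then show ?thesis using bk eS IS by (intro image_eqI[of _ _ "(Some b, k)"]) auto
        qed
      next
        case nF: False
        show ?thesis
        proof (cases "z \<in> Y")
          case True
          then obtain m where m: "m < N" "z = y m" unfolding Y_def by blast
          then have "z = eC None m" using eN E1 by simp
          then show ?thesis using NG W1[OF m(1)] IN by (intro image_eqI[of _ _ "(None, m)"]) auto
        next
          case False
          then have zH: "z \<in> Hb" using z nF unfolding E_def by blast
          then have "z = eC None (Suc (N + 2 * ins z))" using eN E3 by simp
          then show ?thesis using NG W3[OF zH] IN by (intro image_eqI[of _ _ "(None, Suc (N + 2 * ins z))"]) auto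
        qed
      qed
    qed
  qed
  have infC: "infinite (I g)" if "g \<in> G" for g
  proof (cases "g = None")
    case True
    have "inj (\<lambda>k::nat. N + 2 * k)" unfolding inj_def by simp
    then have "infinite (range (\<lambda>k::nat. N + 2 * k))" by (rule range_inj_infinite)
    moreover have "range (\<lambda>k::nat. N + 2 * k) \<subseteq> Wt" unfolding Wt_def by blast
    ultimately show ?thesis using True IN infinite_super by metis
  next
    case False then have "I g = UNIV" unfolding I_def by (simp only: if_False)
    then show ?thesis by simp
  qed
  have inspan: "z \<in> span (elem ` {m \<in> Wt. m \<le> n})" if "j \<in> Wt" "j \<le> n" "z = elem j" for z j n
    using that by (intro span_base) blast
  have hsC: "s (eC g n) - eC g (LEAST m. m \<in> I g \<and> n < m) \<in> span (eC g ` {m \<in> I g. m \<le> n})"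
    if g: "g \<in> G" and n: "n \<in> I g" for g n
  proof (cases g)
    case (Some b)
    then have b: "b \<in> Bf" "b \<noteq> b0" using g unfolding G_def by auto
    have L: "(LEAST m. m \<in> I g \<and> n < m) = Suc n" using Some IS least_next1[of n UNIV] by simp
    have "s (eC g n) - eC g (Suc n) = 0" using Some eS V5[OF b] unfolding s_def by simp
    then show ?thesis using L by (simp add: span_zero)
  next
    case None
    then have nW: "n \<in> Wt" using n IN by simp
    have eqs: "eC g ` {m \<in> I g. m \<le> n} = elem ` {m \<in> Wt. m \<le> n}" using None IN eN by simp
    consider (a) "n < N" "n \<notin> L" | (b) "n < N" "n \<in> L" | (c) k where "n = N + 2 * k" "k \<notin> Ki"
      | (d) h where "h \<in> Hb" "n = N + 2 * ins h" | (e) h where "h \<in> Hb" "n = Suc (N + 2 * ins h)"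
      using kind[OF nW] unfolding Ki_def by blast
    then show ?thesis
    proof cases
      case a
      then have sN: "Suc n < N" "u (y n) = y (Suc n)" using preF(3) by blast+
      have L: "(LEAST m. m \<in> I g \<and> n < m) = Suc n" using None IN W1[OF sN(1)] by (simp add: least_next1)
      have "s (eC g n) - eC g (Suc n) = 0" using None eN E1 a sN V1[OF a(1)] unfolding s_def by simp
      then show ?thesis using L by (simp add: span_zero)
    next
      case b
      have sW: "Suc n \<in> Wt"
      proof (cases "Suc n < N")
        case True then show ?thesis by (rule W1)
      next
        case False then have "Suc n = N + 2 * 0" using b by simp
        then show ?thesis using W2 by metis
      qed
      have L: "(LEAST m. m \<in> I g \<and> n < m) = Suc n" using None IN sW by (simp add: least_next1)
      have enx: "elem (Suc n) = nx n"
      proof (cases "Suc n < N")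
        case True then show ?thesis using E1 unfolding nx_def by simp
      next
        case False then have "Suc n = N + 2 * 0" using b by simp
        then show ?thesis using E2[of 0] False unfolding nx_def by simp
      qed
      have "s (eC g n) - eC g (Suc n) = (u (y n) - fm n) - a *s y n"
        using None eN E1[OF b(1)] enx V1[OF b(1)] b(2) unfolding s_def by (simp add: algebra_simps)
      also have "\<dots> \<in> span (elem ` {m \<in> Wt. m \<le> n})"
      proof (rule span_diff)
        have "y ` {..n} \<subseteq> elem ` {m \<in> Wt. m \<le> n}"
        proof
          fix z assume "z \<in> y ` {..n}"
          then obtain j where j: "j \<le> n" "z = y j" by blast
          then have "j < N" using b by simp
          then show "z \<in> elem ` {m \<in> Wt. m \<le> n}" using j W1 E1 by (intro image_eqI[of _ _ j]) auto
        qed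
        then have "span (y ` {..n}) \<subseteq> span (elem ` {m \<in> Wt. m \<le> n})" by (rule span_mono)
        then show "u (y n) - fm n \<in> span (elem ` {m \<in> Wt. m \<le> n})" using ppS[OF b(2)] by blast
        show "a *s y n \<in> span (elem ` {m \<in> Wt. m \<le> n})"
          by (rule span_scale, rule inspan[OF nW order_refl]) (use E1[OF b(1)] in simp)
      qed
      finally show ?thesis using L eqs by simp
    next
      case (c k)
      have L: "(LEAST m. m \<in> I g \<and> n < m) = Suc (Suc n)"
        using None IN W4[OF c(2)] W2[of "Suc k"] c(1) by (simp add: least_next2)
      have "Suc (Suc n) = N + 2 * Suc k" using c(1) by simp
      then have "eC g (Suc (Suc n)) = c (Suc k)" using None eN E2 by metis
      then have "s (eC g n) - eC g (Suc (Suc n)) = 0" using None eN E2 c V4[OF c(2)] uc unfolding s_def by simp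
      then show ?thesis using L by (simp add: span_zero)
    next
      case (d h)
      have L: "(LEAST m. m \<in> I g \<and> n < m) = Suc n" using None IN W3[OF d(1)] d(2) by (simp add: least_next1)
      have "s (eC g n) - eC g (Suc n) = (1 - a) *s c (ins h)"
        using None eN E2 E3[OF d(1)] d V3[OF d(1)] uc unfolding s_def wh_def
        by (simp add: algebra_simps scale_left_diff_distrib)
      also have "\<dots> \<in> span (elem ` {m \<in> Wt. m \<le> n})"
        by (rule span_scale, rule inspan[OF nW order_refl]) (use E2 d(2) in simp)
      finally show ?thesis using L eqs by simp
    next
      case (e h)
      have sW: "Suc n = N + 2 * Suc (ins h)" using e(2) by simp
      have sW2: "Suc n \<in> Wt" using W2[of "Suc (ins h)"] sW by simp
      have L: "(LEAST m. m \<in> I g \<and> n < m) = Suc n" using None IN least_next1[OF sW2] by simp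
      have hH: "h \<in> H" using e(1) Hbs span_superset by blast
      have ee1: "eC g n = h" using None eN E3[OF e(1)] e(2) by simp
      have ee2: "eC g (Suc n) = c (Suc (ins h))" using None eN E2 sW by metis
      have uh: "u h = lam *s h" using Heig hH by blast
      have "s (eC g n) - eC g (Suc n) = (lam - 1) *s h + (a - 1) *s c (ins h)"
        unfolding ee1 ee2 s_def uh V2[OF e(1)] wh_def
        by (simp add: algebra_simps scale_left_diff_distrib)
      also have "\<dots> \<in> span (elem ` {m \<in> Wt. m \<le> n})"
      proof (rule span_add)
        show "(lam - 1) *s h \<in> span (elem ` {m \<in> Wt. m \<le> n})"
          by (rule span_scale, rule inspan[OF nW order_refl]) (use E3[OF e(1)] e(2) in simp)
        show "(a - 1) *s c (ins h) \<in> span (elem ` {m \<in> Wt. m \<le> n})"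
          by (rule span_scale, rule inspan[OF W2[of "ins h"]]) (use E2 e(2) in simp_all)
      qed
      finally show ?thesis using L eqs by simp
    qed
  qed
  have "elementary scale s"
    by (rule chain_elementary2[OF slin infC injC]) (use imC Ei Es hsC in simp_all)
  then show ?thesis using vlin vv unfolding s_def by blast
qed
end


theorem proposition6:
  fixes scale :: "'f::field \<Rightarrow> 'v::ab_group_add \<Rightarrow> 'v"
    and u :: "'v \<Rightarrow> 'v" and lam a :: 'f
    and W H Fm :: "'v set"
    and D :: "'d::wellorder set" and M :: "'d \<Rightarrow> 'v set"
  assumes vs: "vector_space scale"
    and dim: "\<exists>B. module.independent scale B \<and> module.span scale B = UNIV \<and> countable B \<and> infinite B"
    and lin: "Vector_Spaces.linear scale scale u"
    and W: "submod scale u W" and H: "submod scale u H"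
    and WH_inter: "W \<inter> H = {0}"
    and WH_sum: "module.span scale (W \<union> H) = UNIV"
    and F_free: "free_submod scale u Fm" and F_nz: "Fm \<noteq> {0}" and F_sub: "Fm \<subseteq> W"
    and quot_fin: "\<exists>S. finite S \<and> W \<subseteq> module.span scale (Fm \<union> S)"
    and strat: "W \<noteq> Fm \<Longrightarrow> stratification_quot scale u W Fm D M \<and> PA_plus scale Fm D M"
    and H_eig: "\<forall>x\<in>H. u x = scale lam x"
  shows "\<exists>v. Vector_Spaces.linear scale scale v \<and> (\<forall>x. v (v x) = scale a (v x)) \<and>
             elementary scale (\<lambda>x. u x - v x)"
proof -
  interpret vector_space scale by (rule vs)
  have Fsub: "subspace Fm" "u ` Fm \<subseteq> Fm" using F_free unfolding free_submod_def submod_def by blast+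
  obtain Bf where Bf: "Bf \<subseteq> Fm" "inj_on (\<lambda>(b, k). (u ^^ k) b) (Bf \<times> UNIV)"
    "independent ((\<lambda>(b, k). (u ^^ k) b) ` (Bf \<times> UNIV))"
    "span ((\<lambda>(b, k). (u ^^ k) b) ` (Bf \<times> UNIV)) = Fm"
    using F_free unfolding free_submod_def by blast
  have "Bf \<noteq> {}"
  proof
    assume "Bf = {}"
    then have "Fm = span {}" using Bf(4) by simp
    then show False using F_nz by simp
  qed
  then obtain b0 where b0: "b0 \<in> Bf" by blast
  have sW: "subspace W" and sH: "subspace H" using W H unfolding submod_def by blast+
  have pre: "\<exists>N y L. prefix_ok u Fm N y L W"
  proof (cases "W = Fm")
    case True
    have "span Fm = Fm" by (rule span_subspace[OF order_refl span_superset Fsub(1)])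
    then have "prefix_ok u Fm 0 (\<lambda>_. 0) {} W" unfolding prefix_ok_def using True by simp
    then show ?thesis by blast
  next
    case False
    obtain S0 where S0: "finite S0" "W \<subseteq> span (Fm \<union> S0)" using quot_fin by blast
    show ?thesis using strat[OF False] prefix_exists[OF lin Fsub F_sub S0] by blast
  qed
  then obtain N y L where pre: "prefix_ok u Fm N y L W" by blast
  obtain Hb where Hb: "Hb \<subseteq> H" "independent Hb" "H \<subseteq> span Hb"
    using basis_exists[of H] by metis
  have Hbs: "span Hb = H"
  proof
    show "span Hb \<subseteq> H" using Hb(1) sH by (rule span_minimal)
    show "H \<subseteq> span Hb" by (rule Hb(3))
  qed
  obtain B where B: "independent B" "span B = UNIV" "countable B" using dim by blast
  have Hbc: "countable Hb" using indep_countable[OF Hb(2) B(3) B(2)] .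
  show ?thesis
    by (rule main_construction[OF lin Fsub(1) Bf(2) Bf(3) Bf(4) b0 pre sH WH_inter WH_sum Hb(2) Hbs Hbc H_eig])
qed

end
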